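(* Let $t=(t_1:t_2:t_3)\in C^0(k)$ and let $U_3(\mathbb F_p)=\{A\in\mathrm{GL}_3(\mathbb F_{p^2}):A^TA^{(p)}=\mathbb I_3\}$. Via the map $A\mapsto\alpha_A$ (where $A\cdot t=\alpha_At$): (1) if $t\notin C(\mathbb F_{p^6})$, then $\mathrm{End}(t)\cap U_3(\mathbb F_p)\simeq\{\alpha\in\mathbb F_{p^2}:\alpha^{p+1}=1\}$; (2) if $t\in C(\mathbb F_{p^6})$, then $\mathrm{End}(t)\cap U_3(\mathbb F_p)\simeq\{\alpha\in\mathbb F_{p^6}:\alpha^{p^3+1}=1\}$.
   Context: $k$ is algebraically closed of characteristic $p$, $C\subset\mathbb P^2$ is the Fermat curve $X_1^{p+1}+X_2^{p+1}+X_3^{p+1}=0$, $C^0=C\setminus C(\mathbb F_{p^2})$, $A^{(p)}$ is obtained by raising entries to the $p$-th power, and $\mathrm{End}(t)=\{A\in\mathrm{Mat}_3(\mathbb F_{p^2}):A\cdot t\in k\cdot t\}$ for $t$ viewed as a column vector. *)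

theory Defs
  imports "HOL-Analysis.Analysis" "HOL-Computational_Algebra.Polynomial"
begin

definition alg_closed :: "'k::field itself \<Rightarrow> bool" where
  "alg_closed _ \<longleftrightarrow> (\<forall>q::'k poly. degree q > 0 \<longrightarrow> (\<exists>x. poly q x = 0))"

definition Fq :: "nat \<Rightarrow> nat \<Rightarrow> 'k::field set" where
  "Fq p n = {x. x ^ (p ^ n) = x}"

definition on_fermat :: "nat \<Rightarrow> 'k::field ^ 3 \<Rightarrow> bool" where
  "on_fermat p t \<longleftrightarrow> t \<noteq> 0 \<and> t$1 ^ (p+1) + t$2 ^ (p+1) + t$3 ^ (p+1) = 0"

text \<open>The projective point [t] is defined over the subfield S: some nonzero rescaling of t has
  all coordinates in S.\<close>
definition point_over :: "'k::field set \<Rightarrow> 'k ^ 3 \<Rightarrow> bool" where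
  "point_over S t \<longleftrightarrow> (\<exists>c. c \<noteq> 0 \<and> (\<forall>i. c * t$i \<in> S))"

definition mat_over :: "'k::field set \<Rightarrow> 'k ^ 3 ^ 3 \<Rightarrow> bool" where
  "mat_over S A \<longleftrightarrow> (\<forall>i j. A$i$j \<in> S)"

definition frob_mat :: "nat \<Rightarrow> 'k::field ^ 3 ^ 3 \<Rightarrow> 'k ^ 3 ^ 3" where
  "frob_mat p A = (\<chi> i j. (A$i$j) ^ p)"

definition U3 :: "nat \<Rightarrow> ('k::field ^ 3 ^ 3) set" where
  "U3 p = {A. mat_over (Fq p 2) A \<and> invertible A \<and> transpose A ** frob_mat p A = mat 1}"

definition End_pt :: "nat \<Rightarrow> 'k::field ^ 3 \<Rightarrow> ('k ^ 3 ^ 3) set" where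
  "End_pt p t = {A. mat_over (Fq p 2) A \<and> (\<exists>\<alpha>. A *v t = \<alpha> *s t)}"

text \<open>alpha_A with A t = alpha_A t (well defined for t nonzero).\<close>
definition alpha_of :: "'k::field ^ 3 ^ 3 \<Rightarrow> 'k ^ 3 \<Rightarrow> 'k" where
  "alpha_of A t = (THE \<alpha>. A *v t = \<alpha> *s t)"

end

theory Submission
  imports Defs
begin


definition dt :: "'a::comm_ring_1^3 \<Rightarrow> 'a^3 \<Rightarrow> 'a" where
  "dt x y = x$1*y$1 + x$2*y$2 + x$3*y$3"
definition cr :: "'a::comm_ring_1^3 \<Rightarrow> 'a^3 \<Rightarrow> 'a^3" where
  "cr a b = vector [a$2*b$3 - a$3*b$2, a$3*b$1 - a$1*b$3, a$1*b$2 - a$2*b$1]"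
definition trip :: "'a::comm_ring_1^3 \<Rightarrow> 'a^3 \<Rightarrow> 'a^3 \<Rightarrow> 'a" where
  "trip a b c = dt (cr a b) c"

lemma vec3_eq: "(x::'a^3) = y \<longleftrightarrow> x$1=y$1 \<and> x$2=y$2 \<and> x$3=y$3"
  by (simp add: vec_eq_iff forall_3)

lemma mv3: "((A::'a::semiring_1^3^'n) *v x)$i = A$i$1*x$1 + A$i$2*x$2 + A$i$3*x$3"
  by (simp add: matrix_vector_mult_def sum_3)

lemma cr_comp[simp]: "cr a b $ 1 = a$2*b$3 - a$3*b$2" "cr a b $ 2 = a$3*b$1 - a$1*b$3"
   "cr a b $ 3 = a$1*b$2 - a$2*b$1"
  by (simp_all add: cr_def)

lemma dt_comm: "dt x y = dt y x" by (simp add: dt_def algebra_simps)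
lemma dt_diff: "dt x (y - z) = dt x y - dt x z" by (simp add: dt_def algebra_simps)
lemma dt_smult: "dt (a *s x) y = a * dt x y" "dt x (a *s y) = a * dt x y"
  by (simp_all add: dt_def algebra_simps)

lemma cr_anti: "cr b a = - cr a b" by (simp add: vec3_eq)

lemma dual: "trip a b c *s r = dt r a *s cr b c + dt r b *s cr c a + dt r c *s cr a b"
  by (simp add: vec3_eq trip_def dt_def algebra_simps)

lemma expand: "trip a b c *s r = dt (cr b c) r *s a + dt (cr c a) r *s b + dt (cr a b) r *s c"
  by (simp add: vec3_eq trip_def dt_def algebra_simps)

lemma coeffs:
  "dt (cr b c) (x *s a + y *s b + z *s c) = x * trip a b c"
  "dt (cr c a) (x *s a + y *s b + z *s c) = y * trip a b c"
  "dt (cr a b) (x *s a + y *s b + z *s c) = z * trip a b c"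
  by (simp_all add: trip_def dt_def algebra_simps)

lemma lagr: "cr x (cr a b) = dt x b *s a - dt x a *s b"
  by (simp add: vec3_eq dt_def algebra_simps)

lemma par:
  fixes w x :: "'a::field^3"
  assumes "w \<noteq> 0" "cr x w = 0" shows "\<exists>l. x = l *s w"
proof -
  have e: "x$2*w$3 = x$3*w$2" "x$3*w$1 = x$1*w$3" "x$1*w$2 = x$2*w$1"
    using assms(2) by (simp_all add: vec3_eq)
  have "w$1 \<noteq> 0 \<or> w$2 \<noteq> 0 \<or> w$3 \<noteq> 0" using assms(1) by (simp add: vec3_eq)
  then show ?thesis
  proof (elim disjE)
    assume h: "w$1 \<noteq> 0"
    show ?thesis
      by (rule exI[of _ "x$1 / w$1"]) (use h e in \<open>simp add: vec3_eq field_simps\<close>)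
  next
    assume h: "w$2 \<noteq> 0"
    show ?thesis
      by (rule exI[of _ "x$2 / w$2"]) (use h e in \<open>simp add: vec3_eq field_simps\<close>)
  next
    assume h: "w$3 \<noteq> 0"
    show ?thesis
      by (rule exI[of _ "x$3 / w$3"]) (use h e in \<open>simp add: vec3_eq field_simps\<close>)
  qed
qed

lemma orth:
  fixes a b c r :: "'a::field^3"
  assumes "trip a b c \<noteq> 0" "dt r a = 0" "dt r b = 0" "dt r c = 0" shows "r = 0"
proof -
  have "trip a b c *s r = 0" using dual[of a b c r] assms by simp
  then show ?thesis using assms(1) by (simp add: vec3_eq)
qed

lemma indep:
  fixes a b c :: "'a::field^3"
  assumes "trip a b c \<noteq> 0"
    and "x0 *s a + x1 *s b + x2 *s c = y0 *s a + y1 *s b + y2 *s c"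
  shows "x0 = y0 \<and> x1 = y1 \<and> x2 = y2"
  using coeffs[where x=x0 and y=x1 and z=x2 and a=a and b=b and c=c] coeffs[where x=y0 and y=y1 and z=y2 and a=a and b=b and c=c] assms by auto

lemma mv_smult: "(A::'a::comm_ring_1^3^3) *v (c *s x) = c *s (A *v x)"
  by (simp add: vec3_eq mv3 algebra_simps)

lemma mv_lin3: "(A::'a::comm_ring_1^3^3) *v (x *s a + y *s b + z *s c)
   = x *s (A *v a) + y *s (A *v b) + z *s (A *v c)"
  by (simp add: vec3_eq mv3 algebra_simps)

lemma uniq:
  fixes A B :: "'a::field^3^3"
  assumes "trip a b c \<noteq> 0" "A *v a = B *v a" "A *v b = B *v b" "A *v c = B *v c"
  shows "A = B"
proof -
  have "A *v x = B *v x" for x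
  proof -
    have "trip a b c *s (A *v x) = trip a b c *s (B *v x)"
      unfolding mv_smult[symmetric] expand[of a b c x] mv_lin3 assms(2-4) ..
    then show ?thesis using assms(1) by (simp add: vec3_eq)
  qed
  then show ?thesis by (simp add: matrix_eq)
qed

lemma exist:
  fixes a b c :: "'a::field^3"
  assumes "trip a b c \<noteq> 0"
  shows "\<exists>A. A *v a = u0 *s a \<and> A *v b = u1 *s b \<and> A *v c = u2 *s c"
proof -
  define D where "D = trip a b c"
  have D: "D \<noteq> 0" using assms D_def by simp
  obtain Di where Di: "Di * D = 1" using D by (metis left_inverse)
  define A where "A = (\<chi> i j. Di * (u0*a$i*(cr b c)$j + u1*b$i*(cr c a)$j + u2*c$i*(cr a b)$j))"
  have f: "A *v x = Di *s (u0 * dt (cr b c) x *s a + u1 * dt (cr c a) x *s b + u2 * dt (cr a b) x *s c)" for x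
    by (simp add: vec3_eq mv3 A_def dt_def algebra_simps)
  have t: "dt (cr b c) a = D" "dt (cr c a) b = D" "dt (cr a b) c = D"
    "dt (cr c a) a = 0" "dt (cr a b) a = 0" "dt (cr b c) b = 0" "dt (cr a b) b = 0"
    "dt (cr b c) c = 0" "dt (cr c a) c = 0"
    by (simp_all add: D_def trip_def dt_def algebra_simps)
  have e: "Di * (u * D * v) = u * v" for u v using Di by (simp add: algebra_simps)
  show ?thesis
    by (rule exI[of _ A]) (simp add: f t vec3_eq e Di)
qed



definition fv :: "nat \<Rightarrow> nat \<Rightarrow> 'a::field^3 \<Rightarrow> 'a^3" where
  "fv p n x = (\<chi> i. x$i ^ (p^n))"
definition fm :: "nat \<Rightarrow> nat \<Rightarrow> 'a::field^3^3 \<Rightarrow> 'a^3^3" where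
  "fm p n A = (\<chi> i j. A$i$j ^ (p^n))"

lemma fv_comp[simp]: "fv p n x $ i = x$i ^ (p^n)" by (simp add: fv_def)
lemma fm_comp[simp]: "fm p n A $ i $ j = A$i$j ^ (p^n)" by (simp add: fm_def)

lemma pw_pw: "((x::'a::comm_semiring_1) ^ (p^a)) ^ (p^b) = x ^ (p^(a+b))"
  by (simp add: power_mult[symmetric] power_add)

lemma fv_fv: "fv p b (fv p a x) = fv p (a+b) x" by (simp add: vec3_eq pw_pw)
lemma fv_0[simp]: "fv p 0 x = x" by (simp add: vec3_eq)
lemma fv_smult: "fv p n (c *s x) = c^(p^n) *s fv p n x" by (simp add: vec3_eq power_mult_distrib)

context
  fixes p :: nat
  assumes pr: "prime p" and ch: "CHAR('k::field) = p"
begin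

lemma fr_add: "((x::'k) + y) ^ (p^n) = x^(p^n) + y^(p^n)"
  using freshmans_dream'[of "p^n" n x y] pr ch by simp

lemma fr_diff: "((x::'k) - y) ^ (p^n) = x^(p^n) - y^(p^n)"
  using fr_add[of "x - y" y n] by (simp add: algebra_simps)

lemma fr_inj: "(x::'k) ^ (p^n) = y ^ (p^n) \<Longrightarrow> x = y"
  using fr_diff[of x y n] by simp

lemma fv_inj: "fv p n (x::'k^3) = fv p n y \<Longrightarrow> x = y"
  by (simp add: vec3_eq) (meson fr_inj)

lemma fv_eq0: "fv p n (x::'k^3) = 0 \<longleftrightarrow> x = 0"
  using pr by (simp add: vec3_eq prime_gt_0_nat)

lemma dt_fv: "dt (fv p n x) (fv p n (y::'k^3)) = (dt x y) ^ (p^n)"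
  by (simp add: dt_def fr_add power_mult_distrib)

lemma cr_fv: "cr (fv p n x) (fv p n (y::'k^3)) = fv p n (cr x y)"
  by (simp add: vec3_eq fr_diff power_mult_distrib)

lemma trip_fv: "trip (fv p n x) (fv p n y) (fv p n (z::'k^3)) = (trip x y z) ^ (p^n)"
  by (simp add: trip_def cr_fv dt_fv)

lemma fv_mv: "fv p n ((A::'k^3^3) *v x) = fm p n A *v fv p n x"
  by (simp add: vec3_eq mv3 fr_add power_mult_distrib)

lemma fm_mult: "fm p n ((A::'k^3^3) ** B) = fm p n A ** fm p n B"
  by (simp add: vec_eq_iff matrix_matrix_mult_def sum_3 fr_add power_mult_distrib)

end

lemma root:
  assumes "alg_closed TYPE('k::field)" "m > 0"
  shows "\<exists>x::'k. x ^ m = c"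
proof -
  define q :: "'k poly" where "q = [:-c:] + monom 1 m"
  have "degree q = m" unfolding q_def
    using assms(2) by (subst degree_add_eq_right) (auto simp: degree_monom_eq)
  then obtain x where "poly q x = 0" using assms unfolding alg_closed_def by auto
  then show ?thesis by (auto simp: q_def poly_monom)
qed




context
  fixes p :: nat
  assumes pr: "prime p" and ch: "CHAR('k::field) = p" and alg: "alg_closed TYPE('k)"
begin

lemma p_pos: "p^n > 0" using pr by (simp add: prime_gt_0_nat)

lemma fv_surj: "\<exists>y. fv p n y = (x::'k^3)"
proof -
  have "\<forall>i. \<exists>y::'k. y ^ (p^n) = x$i" using root[OF alg p_pos] by blast
  then obtain f where f: "\<And>i. f i ^ (p^n) = x$i" by metis
  show ?thesis by (rule exI[of _ "\<chi> i. f i"]) (simp add: vec3_eq f)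
qed

lemma par_fv: "fv p n u = l *s fv p n (v::'k^3) \<Longrightarrow> \<exists>m. u = m *s v"
proof -
  assume h: "fv p n u = l *s fv p n (v::'k^3)"
  obtain m :: 'k where m: "m ^ (p^n) = l" using root[OF alg p_pos] by blast
  have "fv p n u = fv p n (m *s v)" using h by (simp add: fv_smult m)
  then show ?thesis using fv_inj[OF pr ch] by blast
qed

lemma pt_over_of:
  assumes n: "n > 0" and t: "(t::'k^3) \<noteq> 0" and h: "fv p n t = l *s t"
  shows "point_over (Fq p n) t"
proof -
  have l: "l \<noteq> 0" using h t fv_eq0[OF pr ch, of n t] by auto
  have p2: "p \<ge> 2" using pr prime_ge_2_nat by blast
  have "p^n \<ge> 2^n" using p2 by (simp add: power_mono)
  moreover have "(2::nat)^n \<ge> 2" using n by (cases n) simp_all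
  ultimately have k: "p^n - 1 > 0" by linarith
  obtain c :: 'k where c: "c ^ (p^n - 1) = inverse l" using root[OF alg k] by blast
  have c0: "c \<noteq> 0"
  proof
    assume "c = 0"
    then have "c^(p^n-1) = 0" using k by simp
    with c l show False by simp
  qed
  have e1: "Suc (p^n - 1) = p^n" using k by simp
  have "c ^ (p^n) = c ^ Suc (p^n - 1)" by (simp only: e1)
  also have "\<dots> = c * inverse l" by (simp only: power_Suc c)
  finally have cp: "c ^ (p^n) = c * inverse l" .
  have "\<forall>i. c * t$i \<in> Fq p n"
  proof
    fix i
    have ti: "t$i ^ (p^n) = l * t$i" using h by (simp add: vec_eq_iff)
    have "(c * t$i) ^ (p^n) = c * t$i"
      by (simp add: power_mult_distrib cp ti l)
    then show "c * t$i \<in> Fq p n" by (simp add: Fq_def)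
  qed
  then show ?thesis using c0 by (auto simp: point_over_def)
qed

end

lemma of_pt_over:
  assumes "point_over (Fq p n) (t::'k::field^3)"
  shows "\<exists>l. fv p n t = l *s t"
proof -
  obtain c where c: "c \<noteq> 0" "\<And>i. c * t$i \<in> Fq p n" using assms by (auto simp: point_over_def)
  have "(c * t$i)^(p^n) = c * t$i" for i using c(2)[of i] by (simp add: Fq_def)
  then have e: "c^(p^n) * t$i^(p^n) = c * t$i" for i by (simp add: power_mult_distrib)
  have cq: "c^(p^n) \<noteq> 0" using c(1) by simp
  have "t$i^(p^n) = (c / c^(p^n)) * t$i" for i
  proof -
    have "t$i^(p^n) = (c^(p^n) * t$i^(p^n)) / c^(p^n)" using cq by simp
    also have "\<dots> = (c / c^(p^n)) * t$i" by (simp add: e)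
    finally show ?thesis .
  qed
  then show ?thesis by (intro exI[of _ "c / c^(p^n)"]) (simp add: vec3_eq)
qed

lemma Fq_pow: "x \<in> Fq p 2 \<Longrightarrow> (x::'k::field)^(p^(2*j)) = x"
proof (induction j)
  case (Suc j)
  have "x^(p^(2*Suc j)) = (x^(p^2))^(p^(2*j))" using pw_pw[of x p 2 "2*j"] by simp
  then show ?case using Suc by (simp add: Fq_def)
qed simp

lemma fm_over: "mat_over (Fq p 2) A \<Longrightarrow> fm p (2*j) A = A"
  by (simp add: vec_eq_iff mat_over_def Fq_pow)

lemma over_of_fm: "fm p 2 A = A \<Longrightarrow> mat_over (Fq p 2) A"
  by (simp add: vec_eq_iff mat_over_def Fq_def)

lemma smult_cancel: "(t::'k::field^3) \<noteq> 0 \<Longrightarrow> a *s t = b *s t \<Longrightarrow> a = b"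
  by (auto simp: vec3_eq)

lemma alpha_eq: "(t::'k::field^3) \<noteq> 0 \<Longrightarrow> A *v t = a *s t \<Longrightarrow> alpha_of A t = a"
  unfolding alpha_of_def by (rule the_equality) (auto dest: smult_cancel)

lemma dt_trans: "dt ((A::'k::field^3^3) *v x) z = dt x (transpose A *v z)"
  by (simp add: dt_def mv3 transpose_def algebra_simps)

lemma frob_mat_fm: "frob_mat p A = fm p 1 A" by (simp add: frob_mat_def fm_def)

lemma unit_dt:
  assumes "transpose A ** fm p 1 A = mat 1" and pr: "prime p" and ch: "CHAR('k::field) = p"
  shows "dt ((A::'k^3^3) *v x) (fv p 1 (A *v y)) = dt x (fv p 1 y)"
proof -
  have "dt ((A::'k^3^3) *v x) (fv p 1 (A *v y)) = dt x ((transpose A ** fm p 1 A) *v fv p 1 y)"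
    by (simp only: fv_mv[OF pr ch] dt_trans matrix_vector_mul_assoc)
  then show ?thesis by (simp only: assms(1) matrix_vector_mul_lid)
qed

lemma mat_mv: "mat a *v (x::'k::field^3) = a *s x"
  by (simp add: vec3_eq mv3 mat_def)

lemma mat_mul: "mat a ** mat b = (mat (a*b) :: 'k::field^3^3)"
  by (simp add: vec_eq_iff matrix_matrix_mult_def mat_def sum_3 forall_3)

lemma fm_mat: "p > 0 \<Longrightarrow> fm p n (mat a) = (mat (a^(p^n)) :: 'k::field^3^3)"
  by (simp add: vec_eq_iff mat_def)



lemma a6: "(a::'k::field) * a^(p^3) = 1 \<Longrightarrow> a^(p^6) = a"
proof -
  assume h: "a * a^(p^3) = 1"
  have "(a * a^(p^3))^(p^3) = 1" using h by simp
  then have h2: "a^(p^3) * a^(p^6) = 1" using pw_pw[of a p 3 3] by (simp add: power_mult_distrib)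
  have "a^(p^6) = a^(p^6) * (a * a^(p^3))" using h by simp
  also have "\<dots> = a * (a^(p^3) * a^(p^6))" by (simp add: algebra_simps)
  also have "\<dots> = a" using h2 by simp
  finally show ?thesis .
qed

lemma smult_cancel_l: "(l::'k::field) \<noteq> 0 \<Longrightarrow> l *s x = l *s y \<Longrightarrow> x = y"
  by (simp add: vec3_eq)

lemma dtM: "dt ((A::'k::field^3^3) *v x) (fv p 1 (A *v y)) = dt x ((transpose A ** fm p 1 A) *v fv p 1 y)"
  if "prime p" "CHAR('k) = p"
  by (simp only: fv_mv[OF that] dt_trans matrix_vector_mul_assoc)

lemma dt_sm1: "dt (x *s u) (fv p 1 (y *s v)) = x * y^p * dt u (fv p 1 v)"
  by (simp add: fv_smult dt_smult)



context
  fixes p :: nat and t :: "'k::field ^ 3"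
  assumes pr: "prime p" and ch: "CHAR('k) = p" and alg: "alg_closed TYPE('k)"
    and fer: "on_fermat p t" and np2: "\<not> point_over (Fq p 2) t"
begin

lemma pp: "p > 0" using pr by (simp add: prime_gt_0_nat)

lemma t0: "t \<noteq> 0" using fer by (simp add: on_fermat_def)

lemma g1: "dt t (fv p 1 t) = 0"
proof -
  have "x * x^p = x^(p+1)" for x :: 'k by simp
  then show ?thesis using fer by (simp add: on_fermat_def dt_def)
qed

lemma hdt: "a + b = c \<Longrightarrow> dt (fv p a t) (fv p c t) = (dt t (fv p b t))^(p^a)"
proof -
  assume "a + b = c"
  have "dt (fv p a t) (fv p a (fv p b t)) = (dt t (fv p b t))^(p^a)" by (rule dt_fv[OF pr ch])
  then show ?thesis using \<open>a+b=c\<close> by (simp add: fv_fv add.commute)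
qed

lemma np2': "fv p 2 t \<noteq> l *s t"
  using pt_over_of[OF pr ch alg, of 2 t l] t0 np2 by auto

lemma w_nz: "cr t (fv p 2 t) \<noteq> 0"
proof
  assume "cr t (fv p 2 t) = 0"
  then have "cr (fv p 2 t) t = 0" using cr_anti[of t "fv p 2 t"] by simp
  then obtain l where "fv p 2 t = l *s t" using par[OF t0] by blast
  then show False using np2' by blast
qed

lemma perp:
  assumes "dt x t = 0" "dt x (fv p 2 t) = 0" shows "\<exists>l. x = l *s cr t (fv p 2 t)"
proof (rule par[OF w_nz])
  have "cr x (cr t (fv p 2 t)) = dt x (fv p 2 t) *s t - dt x t *s fv p 2 t" by (rule lagr)
  then show "cr x (cr t (fv p 2 t)) = 0" using assms by simp
qed

lemma g3nz: "dt t (fv p 3 t) \<noteq> 0"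
proof
  assume g3: "dt t (fv p 3 t) = 0"
  have u1: "dt (fv p 1 t) t = 0" using g1 by (simp add: dt_comm)
  have u2: "dt (fv p 1 t) (fv p 2 t) = 0" using hdt[of 1 1 2] g1 pp by simp
  obtain lam where lam: "fv p 1 t = lam *s cr t (fv p 2 t)" using perp[OF u1 u2] by blast
  have lam0: "lam \<noteq> 0" using lam t0 fv_eq0[OF pr ch, of 1 t] by auto
  have v1: "dt (fv p 3 t) t = 0" using g3 by (simp add: dt_comm)
  have v2: "dt (fv p 3 t) (fv p 2 t) = 0" using hdt[of 2 1 3] g1 pp by (simp add: dt_comm)
  obtain mu where mu: "fv p 3 t = mu *s cr t (fv p 2 t)" using perp[OF v1 v2] by blast
  have "fv p 1 (fv p 2 t) = (mu / lam) *s fv p 1 t"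
    using mu lam lam0 by (simp add: fv_fv vector_smult_assoc)
  then obtain m where "fv p 2 t = m *s t"
    using par_fv[OF pr ch alg, of 1 "fv p 2 t" "mu/lam" t] by auto
  then show False using np2' by blast
qed

lemma key: "trip t (fv p 2 t) (fv p 4 t) \<noteq> 0"
proof
  assume D: "trip t (fv p 2 t) (fv p 4 t) = 0"
  have u1: "dt (fv p 1 t) t = 0" using g1 by (simp add: dt_comm)
  have u2: "dt (fv p 1 t) (fv p 2 t) = 0" using hdt[of 1 1 2] g1 pp by simp
  obtain lam where lam: "fv p 1 t = lam *s cr t (fv p 2 t)" using perp[OF u1 u2] by blast
  have "dt (fv p 1 t) (fv p 4 t) = lam * trip t (fv p 2 t) (fv p 4 t)"
    using lam by (simp add: trip_def dt_smult)
  also have "\<dots> = 0" using D by simp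
  finally have "(dt t (fv p 3 t))^(p^1) = 0" using hdt[of 1 3 4] by simp
  then show False using g3nz by simp
qed

lemma key1: "trip (fv p 1 t) (fv p 3 t) (fv p 5 t) \<noteq> 0"
proof -
  have "trip (fv p 1 t) (fv p 1 (fv p 2 t)) (fv p 1 (fv p 4 t)) = (trip t (fv p 2 t) (fv p 4 t))^(p^1)"
    by (rule trip_fv[OF pr ch])
  then show ?thesis using key by (simp add: fv_fv)
qed




lemma eig: assumes "mat_over (Fq p 2) A" "A *v t = a *s t"
  shows "A *v fv p (2*j) t = a^(p^(2*j)) *s fv p (2*j) t"
proof -
  have "fv p (2*j) (A *v t) = fm p (2*j) A *v fv p (2*j) t" by (rule fv_mv[OF pr ch])
  then show ?thesis using assms by (simp add: fm_over fv_smult)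
qed

lemma eigs: assumes "mat_over (Fq p 2) A" "A *v t = a *s t"
  shows "A *v fv p 2 t = a^(p^2) *s fv p 2 t" "A *v fv p 4 t = a^(p^4) *s fv p 4 t"
    "A *v fv p 6 t = a^(p^6) *s fv p 6 t"
  using eig[OF assms, of 1] eig[OF assms, of 2] eig[OF assms, of 3] by simp_all

lemma unitary: "A \<in> U3 p \<Longrightarrow> transpose A ** fm p 1 A = mat 1"
  by (simp add: U3_def frob_mat_fm)

lemma acond: assumes A: "A \<in> End_pt p t \<inter> U3 p" and At: "A *v t = a *s t"
  shows "a * a^(p^3) = 1"
proof -
  have mo: "mat_over (Fq p 2) A" using A by (simp add: End_pt_def)
  have U: "transpose A ** fm p 1 A = mat 1" using A unitary by blast
  have e1: "A *v fv p 2 t = a^(p^2) *s fv p 2 t" using eigs[OF mo At] by simp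
  have "dt (A *v t) (fv p 1 (A *v fv p 2 t)) = dt t (fv p 1 (fv p 2 t))"
    by (rule unit_dt[OF U pr ch])
  then have "a * (a^(p^2))^p * dt t (fv p 3 t) = dt t (fv p 3 t)"
    by (simp only: e1 At dt_sm1 fv_fv) simp
  moreover have "(a^(p^2))^p = a^(p^3)" using pw_pw[of a p 2 1] by simp
  ultimately have "(a * a^(p^3) - 1) * dt t (fv p 3 t) = 0" by (simp add: algebra_simps)
  then show ?thesis using g3nz by simp
qed

lemma inj_main:
  assumes "mat_over (Fq p 2) A" "A *v t = a *s t" "mat_over (Fq p 2) B" "B *v t = a *s t"
  shows "A = B"
  by (rule uniq[OF key]) (simp_all add: eigs[OF assms(1,2)] eigs[OF assms(3,4)] assms)

lemma case1:
  assumes np6: "\<not> point_over (Fq p 6) t"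
    and A: "A \<in> End_pt p t \<inter> U3 p" and At: "A *v t = a *s t"
  shows "a^(p^2) = a"
proof (rule ccontr)
  assume ne: "a^(p^2) \<noteq> a"
  have mo: "mat_over (Fq p 2) A" using A by (simp add: End_pt_def)
  have h1: "a * a^(p^3) = 1" by (rule acond[OF A At])
  have h6: "a^(p^6) = a" by (rule a6[OF h1])
  have ne4: "a^(p^4) \<noteq> a"
  proof
    assume "a^(p^4) = a"
    then have "(a^(p^4))^(p^2) = a^(p^2)" by simp
    then have "a^(p^6) = a^(p^2)" using pw_pw[of a p 4 2] by simp
    then show False using h6 ne by simp
  qed
  define D where "D = trip t (fv p 2 t) (fv p 4 t)"
  define c0 where "c0 = dt (cr (fv p 2 t) (fv p 4 t)) (fv p 6 t)"
  define c1 where "c1 = dt (cr (fv p 4 t) t) (fv p 6 t)"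
  define c2 where "c2 = dt (cr t (fv p 2 t)) (fv p 6 t)"
  have ex: "D *s fv p 6 t = c0 *s t + c1 *s fv p 2 t + c2 *s fv p 4 t"
    unfolding D_def c0_def c1_def c2_def by (rule expand)
  have e: "A *v fv p 2 t = a^(p^2) *s fv p 2 t" "A *v fv p 4 t = a^(p^4) *s fv p 4 t"
    "A *v fv p 6 t = a *s fv p 6 t" using eigs[OF mo At] h6 by simp_all
  have "A *v (D *s fv p 6 t) = D *s (A *v fv p 6 t)" by (rule mv_smult)
  also have "\<dots> = a *s (D *s fv p 6 t)" using e(3) by (simp add: vector_smult_assoc mult.commute)
  also have "\<dots> = (a * c0) *s t + (a * c1) *s fv p 2 t + (a * c2) *s fv p 4 t"
    by (simp only: ex vector_add_ldistrib vector_smult_assoc)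
  finally have "A *v (D *s fv p 6 t) = (a * c0) *s t + (a * c1) *s fv p 2 t + (a * c2) *s fv p 4 t" .
  moreover have "A *v (D *s fv p 6 t) = (c0 * a) *s t + (c1 * a^(p^2)) *s fv p 2 t + (c2 * a^(p^4)) *s fv p 4 t"
    by (simp only: ex mv_lin3 e At vector_smult_assoc)
  ultimately have "c1 * a^(p^2) = a * c1" "c2 * a^(p^4) = a * c2"
    using indep[OF key, of "a*c0" "a*c1" "a*c2" "c0*a" "c1 * a^(p^2)" "c2 * a^(p^4)"] by auto
  then have "c1 = 0" "c2 = 0" using ne ne4 by (auto simp: algebra_simps)
  then have "D *s fv p 6 t = c0 *s t" using ex by simp
  then have "fv p 6 t = (c0 / D) *s t"
    using key unfolding D_def[symmetric] by (simp add: vec3_eq field_simps)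
  then have "point_over (Fq p 6) t" using pt_over_of[OF pr ch alg, of 6 t "c0/D"] t0 by simp
  then show False using np6 by simp
qed




lemma surj1:
  assumes a2: "a \<in> Fq p 2" and a1: "a^(p+1) = 1"
  shows "mat a \<in> End_pt p t \<inter> U3 p" "alpha_of (mat a) t = a"
proof -
  have a0: "a \<noteq> 0" using a1 by auto
  have mo: "mat_over (Fq p 2) (mat a)"
    using a2 pp by (simp add: mat_over_def mat_def Fq_def)
  have mv: "mat a *v t = a *s t" by (rule mat_mv)
  have inv: "invertible (mat a :: 'k^3^3)" unfolding invertible_def
  proof (rule exI[of _ "mat (inverse a) :: 'k^3^3"])
    have "mat a ** mat (inverse a) = (mat (a * inverse a) :: 'k^3^3)" by (rule mat_mul)
    moreover have "mat (inverse a) ** mat a = (mat (inverse a * a) :: 'k^3^3)" by (rule mat_mul)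
    ultimately show "mat a ** mat (inverse a) = (mat 1 :: 'k^3^3) \<and> mat (inverse a) ** mat a = (mat 1 :: 'k^3^3)"
      using a0 by simp
  qed
  have "transpose (mat a) ** frob_mat p (mat a) = mat (a * a^p)"
    by (simp add: frob_mat_fm fm_mat[OF pp] mat_mul)
  also have "a * a^p = 1" using a1 by simp
  finally have u: "transpose (mat a) ** frob_mat p (mat a) = mat 1" .
  show "mat a \<in> End_pt p t \<inter> U3 p" using mo mv inv u by (auto simp: End_pt_def U3_def)
  show "alpha_of (mat a) t = a" by (rule alpha_eq[OF t0 mv])
qed

lemma Mfix:
  assumes h: "\<And>x. x \<in> {t, fv p 2 t, fv p 4 t} \<Longrightarrow> dt (A *v x) (fv p 1 (A *v s)) = dt x (fv p 1 s)"
  shows "(transpose A ** fm p 1 A) *v fv p 1 s = fv p 1 s"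
proof -
  define r where "r = (transpose A ** fm p 1 A) *v fv p 1 s - fv p 1 s"
  have "dt r x = 0" if "x \<in> {t, fv p 2 t, fv p 4 t}" for x
  proof -
    have "dt r x = dt x ((transpose A ** fm p 1 A) *v fv p 1 s) - dt x (fv p 1 s)"
      by (simp add: r_def dt_comm[of _ x] dt_diff)
    also have "\<dots> = 0" using h[OF that] dtM[OF pr ch, of A x s] by simp
    finally show ?thesis .
  qed
  then have "r = 0" using orth[OF key] by simp
  then show ?thesis by (simp add: r_def)
qed

lemma surj2:
  assumes po: "point_over (Fq p 6) t" and a6: "a \<in> Fq p 6" and a1: "a^(p^3+1) = 1"
  shows "\<exists>A\<in>End_pt p t \<inter> U3 p. alpha_of A t = a"
proof -
  have h1: "a * a^(p^3) = 1" using a1 by (simp add: power_add mult.commute)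
  have a0: "a \<noteq> 0" using h1 by auto
  have h6: "a^(p^6) = a" using a6 by (simp add: Fq_def)
  obtain l where l: "fv p 6 t = l *s t" using of_pt_over[OF po] by blast
  have l0: "l \<noteq> 0" using l t0 fv_eq0[OF pr ch, of 6 t] by auto
  obtain A where A: "A *v t = a *s t" "A *v fv p 2 t = a^(p^2) *s fv p 2 t"
      "A *v fv p 4 t = a^(p^4) *s fv p 4 t"
    using exist[OF key] by blast
  have fvA: "fm p 2 A *v fv p 2 x = fv p 2 (A *v x)" for x by (simp only: fv_mv[OF pr ch])
  have f1: "fm p 2 A *v fv p 2 t = a^(p^2) *s fv p 2 t" by (simp add: fvA A fv_smult)
  have f2: "fm p 2 A *v fv p 4 t = a^(p^4) *s fv p 4 t"
  proof -
    have "fm p 2 A *v fv p 4 t = fm p 2 A *v fv p 2 (fv p 2 t)" by (simp add: fv_fv)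
    also have "\<dots> = (a^(p^2))^(p^2) *s fv p 2 (fv p 2 t)" by (simp only: fvA A fv_smult)
    finally show ?thesis using pw_pw[of a p 2 2] by (simp add: fv_fv)
  qed
  have f3: "fm p 2 A *v fv p 6 t = a *s fv p 6 t"
  proof -
    have "fm p 2 A *v fv p 6 t = fm p 2 A *v fv p 2 (fv p 4 t)" by (simp add: fv_fv)
    also have "\<dots> = (a^(p^4))^(p^2) *s fv p 2 (fv p 4 t)" by (simp only: fvA A fv_smult)
    finally show ?thesis using pw_pw[of a p 4 2] h6 by (simp add: fv_fv)
  qed
  have f0: "fm p 2 A *v t = a *s t"
  proof -
    have "l *s (fm p 2 A *v t) = l *s (a *s t)"
      using f3 unfolding l mv_smult by (simp add: vector_smult_assoc mult.commute)
    then show ?thesis using smult_cancel_l[OF l0] by blast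
  qed
  have "fm p 2 A = A" by (rule uniq[OF key]) (simp_all add: f0 f1 f2 A)
  then have mo: "mat_over (Fq p 2) A" by (rule over_of_fm)
  obtain B where B: "B *v t = inverse a *s t" "B *v fv p 2 t = inverse (a^(p^2)) *s fv p 2 t"
      "B *v fv p 4 t = inverse (a^(p^4)) *s fv p 4 t"
    using exist[OF key] by blast
  have "A ** B = mat 1"
    by (rule uniq[OF key]) (simp_all add: matrix_vector_mul_assoc[symmetric] A B mv_smult vector_smult_assoc a0)
  moreover have "B ** A = mat 1"
    by (rule uniq[OF key]) (simp_all add: matrix_vector_mul_assoc[symmetric] A B mv_smult vector_smult_assoc a0)
  ultimately have inv: "invertible A" unfolding invertible_def by blast
  have c01: "a * (a^(p^2))^p = 1" using pw_pw[of a p 2 1] h1 by simp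
  have c12: "a^(p^2) * (a^(p^4))^p = 1"
  proof -
    have "(a * a^(p^3))^(p^2) = 1" using h1 by simp
    then show ?thesis using pw_pw[of a p 4 1] pw_pw[of a p 3 2] by (simp add: power_mult_distrib)
  qed
  have c20: "a^(p^4) * a^p = 1"
  proof -
    have "(a * a^(p^3))^p = 1" using h1 by simp
    then show ?thesis using pw_pw[of a p 3 1] by (simp add: power_mult_distrib mult.commute)
  qed
  have z10: "dt (fv p 2 t) (fv p 1 t) = 0" using hdt[of 1 1 2] g1 pp by (simp add: dt_comm)
  have z11: "dt (fv p 2 t) (fv p 1 (fv p 2 t)) = 0" using hdt[of 2 1 3] g1 pp by (simp add: fv_fv)
  have z21: "dt (fv p 4 t) (fv p 1 (fv p 2 t)) = 0" using hdt[of 3 1 4] g1 pp by (simp add: fv_fv dt_comm)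
  have z22: "dt (fv p 4 t) (fv p 1 (fv p 4 t)) = 0" using hdt[of 4 1 5] g1 pp by (simp add: fv_fv)
  have z02: "dt t (fv p 1 (fv p 4 t)) = 0"
  proof -
    have "(dt t (fv p 5 t))^(p^1) = dt (fv p 1 t) (fv p 6 t)" using hdt[of 1 5 6] by simp
    also have "\<dots> = l * dt t (fv p 1 t)" by (simp add: l dt_smult dt_comm)
    also have "\<dots> = 0" using g1 by simp
    finally show ?thesis using pp by (simp add: fv_fv)
  qed
  have gen: "dt (A *v x) (fv p 1 (A *v y)) = dt x (fv p 1 y)"
    if "A *v x = u *s x" "A *v y = v *s y" "u * v^p = 1 \<or> dt x (fv p 1 y) = 0" for x y u v
  proof -
    have "dt (A *v x) (fv p 1 (A *v y)) = u * v^p * dt x (fv p 1 y)" by (simp only: that(1,2) dt_sm1)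
    then show ?thesis using that(3) by auto
  qed
  have q00: "dt (A *v t) (fv p 1 (A *v t)) = dt t (fv p 1 t)" by (rule gen[OF A(1) A(1)]) (rule disjI2, rule g1)
  have q01: "dt (A *v t) (fv p 1 (A *v fv p 2 t)) = dt t (fv p 1 (fv p 2 t))" by (rule gen[OF A(1) A(2)]) (rule disjI1, rule c01)
  have q02: "dt (A *v t) (fv p 1 (A *v fv p 4 t)) = dt t (fv p 1 (fv p 4 t))" by (rule gen[OF A(1) A(3)]) (rule disjI2, rule z02)
  have q10: "dt (A *v fv p 2 t) (fv p 1 (A *v t)) = dt (fv p 2 t) (fv p 1 t)" by (rule gen[OF A(2) A(1)]) (rule disjI2, rule z10)
  have q11: "dt (A *v fv p 2 t) (fv p 1 (A *v fv p 2 t)) = dt (fv p 2 t) (fv p 1 (fv p 2 t))" by (rule gen[OF A(2) A(2)]) (rule disjI2, rule z11)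
  have q12: "dt (A *v fv p 2 t) (fv p 1 (A *v fv p 4 t)) = dt (fv p 2 t) (fv p 1 (fv p 4 t))" by (rule gen[OF A(2) A(3)]) (rule disjI1, rule c12)
  have q20: "dt (A *v fv p 4 t) (fv p 1 (A *v t)) = dt (fv p 4 t) (fv p 1 t)" by (rule gen[OF A(3) A(1)]) (rule disjI1, rule c20)
  have q21: "dt (A *v fv p 4 t) (fv p 1 (A *v fv p 2 t)) = dt (fv p 4 t) (fv p 1 (fv p 2 t))" by (rule gen[OF A(3) A(2)]) (rule disjI2, rule z21)
  have q22: "dt (A *v fv p 4 t) (fv p 1 (A *v fv p 4 t)) = dt (fv p 4 t) (fv p 1 (fv p 4 t))" by (rule gen[OF A(3) A(3)]) (rule disjI2, rule z22)
  have Mt: "(transpose A ** fm p 1 A) *v fv p 1 y = fv p 1 y" if "y \<in> {t, fv p 2 t, fv p 4 t}" for y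
  proof (rule Mfix)
    fix x assume "x \<in> {t, fv p 2 t, fv p 4 t}"
    then have xd: "x = t \<or> x = fv p 2 t \<or> x = fv p 4 t" by simp
    have yd: "y = t \<or> y = fv p 2 t \<or> y = fv p 4 t" using that by simp
    show "dt (A *v x) (fv p 1 (A *v y)) = dt x (fv p 1 y)"
      using xd yd by (elim disjE; simp only: q00 q01 q02 q10 q11 q12 q20 q21 q22)
  qed
  have "transpose A ** fm p 1 A = mat 1"
    by (rule uniq[OF key1]) (use Mt[of t] Mt[of "fv p 2 t"] Mt[of "fv p 4 t"] in \<open>simp_all add: fv_fv\<close>)
  then have "A \<in> End_pt p t \<inter> U3 p" using mo inv A(1) by (auto simp: End_pt_def U3_def frob_mat_fm)
  moreover have "alpha_of A t = a" by (rule alpha_eq[OF t0 A(1)])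
  ultimately show ?thesis by blast
qed

end

theorem lemma5p10:
  fixes p :: nat and t :: "'k::field ^ 3"
  assumes "prime p" and "CHAR('k) = p" and "alg_closed TYPE('k)"
    and "on_fermat p t" and "\<not> point_over (Fq p 2) t"
  shows "(\<forall>A\<in>End_pt p t \<inter> U3 p. \<forall>B\<in>End_pt p t \<inter> U3 p.
            alpha_of (A ** B) t = alpha_of A t * alpha_of B t)
    \<and> (\<not> point_over (Fq p 6) t \<longrightarrow>
         bij_betw (\<lambda>A. alpha_of A t) (End_pt p t \<inter> U3 p) {\<alpha> \<in> Fq p 2. \<alpha> ^ (p + 1) = 1})
    \<and> (point_over (Fq p 6) t \<longrightarrow>
         bij_betw (\<lambda>A. alpha_of A t) (End_pt p t \<inter> U3 p) {\<alpha> \<in> Fq p 6. \<alpha> ^ (p ^ 3 + 1) = 1})"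
proof -
  note H = assms
  have t0: "t \<noteq> 0" by (rule t0[OF H])
  let ?S = "End_pt p t \<inter> U3 p"
  have al: "A *v t = alpha_of A t *s t" if AS: "A \<in> ?S" for A
  proof -
    obtain a where a: "A *v t = a *s t" using AS by (auto simp: End_pt_def)
    then have "alpha_of A t = a" by (rule alpha_eq[OF t0])
    then show ?thesis using a by simp
  qed
  have mo: "mat_over (Fq p 2) A" if "A \<in> ?S" for A using that by (simp add: End_pt_def)
  have P1: "\<forall>A\<in>?S. \<forall>B\<in>?S. alpha_of (A ** B) t = alpha_of A t * alpha_of B t"
  proof (intro ballI)
    fix A B assume A: "A \<in> ?S" and B: "B \<in> ?S"
    have "(A ** B) *v t = A *v (B *v t)" by (simp add: matrix_vector_mul_assoc)
    also have "\<dots> = (alpha_of A t * alpha_of B t) *s t"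
      by (simp add: al[OF A] al[OF B] mv_smult vector_smult_assoc mult.commute)
    finally show "alpha_of (A ** B) t = alpha_of A t * alpha_of B t" by (rule alpha_eq[OF t0])
  qed
  have inj: "inj_on (\<lambda>A. alpha_of A t) ?S"
  proof (rule inj_onI)
    fix A B assume A: "A \<in> ?S" and B: "B \<in> ?S" and e: "alpha_of A t = alpha_of B t"
    show "A = B" by (rule inj_main[OF H mo[OF A] al[OF A] mo[OF B]]) (simp add: e al[OF B])
  qed
  have C1: "bij_betw (\<lambda>A. alpha_of A t) ?S {\<alpha> \<in> Fq p 2. \<alpha> ^ (p + 1) = 1}"
    if np6: "\<not> point_over (Fq p 6) t"
    unfolding bij_betw_def
  proof (intro conjI inj subset_antisym subsetI)
    fix b :: 'k assume "b \<in> (\<lambda>A. alpha_of A t) ` ?S"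
    then obtain A where A: "A \<in> ?S" and b: "b = alpha_of A t" by blast
    have e2: "b^(p^2) = b" using case1[OF H np6 A al[OF A]] b by simp
    have e3: "b * b^(p^3) = 1" using acond[OF H A al[OF A]] b by simp
    have "b^(p^3) = b^p" using pw_pw[of b p 2 1] e2 by simp
    then have "b^(p+1) = 1" using e3 by (simp add: mult.commute)
    then show "b \<in> {\<alpha> \<in> Fq p 2. \<alpha> ^ (p + 1) = 1}" using e2 by (simp add: Fq_def)
  next
    fix b :: 'k assume "b \<in> {\<alpha> \<in> Fq p 2. \<alpha> ^ (p + 1) = 1}"
    then have b: "b \<in> Fq p 2" "b^(p+1) = 1" by auto
    show "b \<in> (\<lambda>A. alpha_of A t) ` ?S"
      using surj1[OF H b] by (metis image_eqI)
  qed
  have C2: "bij_betw (\<lambda>A. alpha_of A t) ?S {\<alpha> \<in> Fq p 6. \<alpha> ^ (p ^ 3 + 1) = 1}"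
    if po: "point_over (Fq p 6) t"
    unfolding bij_betw_def
  proof (intro conjI inj subset_antisym subsetI)
    fix b :: 'k assume "b \<in> (\<lambda>A. alpha_of A t) ` ?S"
    then obtain A where A: "A \<in> ?S" and b: "b = alpha_of A t" by blast
    have e3: "b * b^(p^3) = 1" using acond[OF H A al[OF A]] b by simp
    have e6: "b^(p^6) = b" by (rule a6[OF e3])
    have "b^(p^3+1) = 1" using e3 by (simp add: mult.commute)
    then show "b \<in> {\<alpha> \<in> Fq p 6. \<alpha> ^ (p^3 + 1) = 1}" using e6 by (simp add: Fq_def)
  next
    fix b :: 'k assume "b \<in> {\<alpha> \<in> Fq p 6. \<alpha> ^ (p^3 + 1) = 1}"
    then have b: "b \<in> Fq p 6" "b^(p^3+1) = 1" by auto
    obtain A where "A \<in> ?S" "alpha_of A t = b" using surj2[OF H po b] by blast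
    then show "b \<in> (\<lambda>A. alpha_of A t) ` ?S" by (metis image_eqI)
  qed
  show ?thesis using P1 C1 C2 by blast
qed


end
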